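(* Let $\mathcal X\subseteq\mathbb R^m$ be nonempty, convex and compact, $F:\mathbb R^m\to\mathbb R^r$ differentiable, $C\in\mathbb R^{r\times n}$ acute with nonzero columns, and $\Theta(x,y)=\frac12\|F(x)-Cy\|^2$. Let $L,\ell>0$ be such that for every $y\in\{0,1\}^n$, $\Theta(\cdot,y)$ is $L$-Lipschitz on $\mathcal X$ with $\|\nabla_x\Theta(x,y)\|\le L$ on $\mathcal X$, and $\nabla_x\Theta(\cdot,y)$ is $\ell$-Lipschitz on $\mathcal X$. Let $\varphi(x)=\max_{y\in\{0,1\}^n}\Theta(x,y)$, $x_0\in\mathcal X$, and $\Delta=\varphi(x_0)-\min_{x\in\mathcal X}\varphi(x)>0$. Given $\epsilon>0$, set $K=\lfloor 64L^2\ell\Delta/\epsilon^4\rfloor$ and $\mu=(\Delta/(L^2\ell(K+1)))^{1/2}$. For $k=0,\dots,K$ let $y_k$ be a maximizer of $\Theta(x_k,\cdot)$ over $\{0,1\}^n$ (computed by an exact oracle) and $x_{k+1}=\operatorname{Proj}_{\mathcal X}(x_k-\mu\nabla_x\Theta(x_k,y_k))$. Let $\hat x$ be chosen uniformly at random from $\{x_0,\dots,x_K\}$. Then $$\mathbb E\big[\|\nabla\varphi_{1/(2\ell)}(\hat x)\|\big]\le\epsilon.$$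
   Context: $C=(c_1,\dots,c_n)$ is acute if $c_i^\top c_j\ge0$ for all $i\ne j$. $\operatorname{Proj}_{\mathcal X}$ is Euclidean projection onto $\mathcal X$. The Moreau envelope of $\varphi$ with parameter $\lambda>0$ is $\varphi_\lambda(x)=\min_{w\in\mathcal X}\{\varphi(w)+\frac1{2\lambda}\|w-x\|^2\}$; under the hypotheses $\varphi$ is $\ell$-weakly convex on $\mathcal X$, so $\varphi_{1/(2\ell)}$ is differentiable. The expectation is over the uniform random choice of $\hat x$. *)

theory Defs
  imports "HOL-Analysis.Analysis" "HOL-Probability.Probability"
begin

definition grad :: "('a::euclidean_space \<Rightarrow> real) \<Rightarrow> 'a \<Rightarrow> 'a" where
  "grad f x = (SOME g. (f has_derivative (\<lambda>h. g \<bullet> h)) (at x))"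

definition binvecs :: "(real^'n) set" where
  "binvecs = {y. \<forall>i. y $ i \<in> {0, 1}}"

definition acute :: "real^'n^'r \<Rightarrow> bool" where
  "acute C \<longleftrightarrow> (\<forall>i j. i \<noteq> j \<longrightarrow> column i C \<bullet> column j C \<ge> 0)"

definition Theta :: "(real^'m \<Rightarrow> real^'r) \<Rightarrow> real^'n^'r \<Rightarrow> real^'m \<Rightarrow> real^'n \<Rightarrow> real" where
  "Theta F C x y = (1/2) * (norm (F x - C *v y))^2"

definition phi :: "(real^'m \<Rightarrow> real^'r) \<Rightarrow> real^'n^'r \<Rightarrow> real^'m \<Rightarrow> real" where
  "phi F C x = Max ((\<lambda>y. Theta F C x y) ` binvecs)"

definition moreau :: "('a::real_normed_vector \<Rightarrow> real) \<Rightarrow> 'a set \<Rightarrow> real \<Rightarrow> 'a \<Rightarrow> real" where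
  "moreau f X lam x = (INF w\<in>X. f w + 1 / (2 * lam) * (norm (w - x))^2)"

end

theory Submission
  imports Defs
begin


lemma grad_works:
  fixes f :: "'a::euclidean_space \<Rightarrow> real"
  assumes "f differentiable (at x)"
  shows "(f has_derivative (\<lambda>h. grad f x \<bullet> h)) (at x)"
proof -
  obtain D where D: "(f has_derivative D) (at x)" using assms by (auto simp: differentiable_def)
  have lin: "linear D" using D has_derivative_linear by blast
  define g where "g = (\<Sum>b\<in>Basis. D b *\<^sub>R b)"
  have "D h = g \<bullet> h" for h
  proof -
    have "D h = D (\<Sum>b\<in>Basis. (h \<bullet> b) *\<^sub>R b)" by (simp add: euclidean_representation)
    also have "\<dots> = (\<Sum>b\<in>Basis. (h \<bullet> b) * D b)"
      by (simp add: linear_sum[OF lin] linear_cmul[OF lin])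
    also have "\<dots> = (\<Sum>b\<in>Basis. D b * (b \<bullet> h))"
      by (rule sum.cong) (simp_all add: inner_commute)
    also have "\<dots> = g \<bullet> h" by (simp add: g_def inner_sum_left)
    finally show ?thesis .
  qed
  then have "(f has_derivative (\<lambda>h. g \<bullet> h)) (at x)" using D by (metis (no_types) ext)
  then have "\<exists>g. (f has_derivative (\<lambda>h. g \<bullet> h)) (at x)" by blast
  then show ?thesis unfolding grad_def by (rule someI_ex)
qed

lemma grad_unique:
  fixes f :: "'a::euclidean_space \<Rightarrow> real"
  assumes "(f has_derivative (\<lambda>h. v \<bullet> h)) (at x)"
  shows "grad f x = v"
proof -
  have d: "f differentiable (at x)" using assms by (auto simp: differentiable_def)
  have "(\<lambda>h. grad f x \<bullet> h) = (\<lambda>h. v \<bullet> h)"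
    using has_derivative_unique[OF grad_works[OF d] assms] .
  then have "grad f x \<bullet> (grad f x - v) = v \<bullet> (grad f x - v)" by metis
  then have "(grad f x - v) \<bullet> (grad f x - v) = 0" by (simp add: inner_diff_left)
  then show ?thesis by simp
qed

lemma descent:
  fixes f :: "'a::euclidean_space \<Rightarrow> real"
  assumes X: "convex X" and fd: "\<And>z. f differentiable (at z)"
    and lip: "ell-lipschitz_on X (grad f)" and u: "u \<in> X" and v: "v \<in> X"
  shows "f v \<ge> f u + grad f u \<bullet> (v - u) - ell/2 * norm (v - u)^2"
proof -
  define d where "d = v - u"
  define h where "h t = f (u + t *\<^sub>R d) - t * (grad f u \<bullet> d) + ell/2 * t^2 * norm d^2" for t
  have "h 0 \<le> h 1"
  proof (rule DERIV_nonneg_imp_nondecreasing[of 0 1 h])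
    fix t :: real assume t: "0 \<le> t" "t \<le> 1"
    have z: "u + t *\<^sub>R d \<in> X"
    proof -
      have "u + t *\<^sub>R d = (1 - t) *\<^sub>R u + t *\<^sub>R v" by (simp add: d_def algebra_simps)
      then show ?thesis using convexD[OF X u v, of "1-t" t] t by simp
    qed
    have l1: "((\<lambda>t. u + t *\<^sub>R d) has_derivative (\<lambda>s. s *\<^sub>R d)) (at t)"
      by (auto intro!: derivative_eq_intros)
    have "((\<lambda>t. f (u + t *\<^sub>R d)) has_derivative (\<lambda>s. grad f (u + t *\<^sub>R d) \<bullet> (s *\<^sub>R d))) (at t)"
      using has_derivative_compose[OF l1 grad_works[OF fd]] by (simp add: o_def)
    then have D1: "((\<lambda>t. f (u + t *\<^sub>R d)) has_real_derivative (grad f (u + t *\<^sub>R d) \<bullet> d)) (at t)"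
      unfolding has_field_derivative_def
    proof -
      assume a: "((\<lambda>t. f (u + t *\<^sub>R d)) has_derivative (\<lambda>s. grad f (u + t *\<^sub>R d) \<bullet> (s *\<^sub>R d))) (at t)"
      have "(\<lambda>s. grad f (u + t *\<^sub>R d) \<bullet> (s *\<^sub>R d)) = (*) (grad f (u + t *\<^sub>R d) \<bullet> d)"
        by (auto simp: fun_eq_iff)
      with a show "((\<lambda>t. f (u + t *\<^sub>R d)) has_derivative (*) (grad f (u + t *\<^sub>R d) \<bullet> d)) (at t)" by simp
    qed
    have D: "(h has_real_derivative (grad f (u + t *\<^sub>R d) \<bullet> d - grad f u \<bullet> d + ell * t * norm d^2)) (at t)"
      unfolding h_def[abs_def]
      by (rule derivative_eq_intros D1 | simp)+
    have "dist (grad f (u + t *\<^sub>R d)) (grad f u) \<le> ell * dist (u + t *\<^sub>R d) u"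
      using lipschitz_onD[OF lip z u] .
    then have n: "norm (grad f (u + t *\<^sub>R d) - grad f u) \<le> ell * t * norm d"
      using t by (simp add: dist_norm)
    have "\<bar>(grad f (u + t *\<^sub>R d) - grad f u) \<bullet> d\<bar> \<le> norm (grad f (u + t *\<^sub>R d) - grad f u) * norm d"
      by (rule Cauchy_Schwarz_ineq2)
    also have "\<dots> \<le> ell * t * norm d * norm d" using n by (simp add: mult_right_mono)
    finally have "0 \<le> grad f (u + t *\<^sub>R d) \<bullet> d - grad f u \<bullet> d + ell * t * norm d^2"
      by (simp add: inner_diff_left power2_eq_square algebra_simps)
    with D show "\<exists>y. (h has_real_derivative y) (at t) \<and> 0 \<le> y" by blast
  qed simp
  then show ?thesis by (simp add: h_def d_def)
qed

lemma binvecs_finite: "finite (binvecs :: (real^'n) set)"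
proof -
  have "binvecs \<subseteq> (\<lambda>b::'n \<Rightarrow> bool. \<chi> i. if b i then 1 else 0) ` UNIV"
  proof
    fix y :: "real^'n" assume "y \<in> binvecs"
    then have "\<forall>i. y $ i = 0 \<or> y $ i = 1" by (auto simp: binvecs_def)
    then have "y = (\<chi> i. if y $ i = 1 then 1 else 0)" by (auto simp: vec_eq_iff)
    then show "y \<in> (\<lambda>b::'n \<Rightarrow> bool. \<chi> i. if b i then 1 else 0) ` UNIV"
      by (intro image_eqI[where x="\<lambda>i. y $ i = 1"]) auto
  qed
  then show ?thesis by (rule finite_subset) simp
qed

lemma binvecs_zero: "0 \<in> binvecs" by (simp add: binvecs_def)

lemma phi_ge: "yb \<in> binvecs \<Longrightarrow> Theta F C x yb \<le> phi F C x"
  unfolding phi_def by (rule Max_ge) (auto simp: binvecs_finite)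

lemma phi_attained: "\<exists>yb\<in>binvecs. phi F C x = Theta F C x yb"
proof -
  have "phi F C x \<in> (\<lambda>y. Theta F C x y) ` binvecs"
    unfolding phi_def by (rule Max_in) (use binvecs_finite binvecs_zero in auto)
  then show ?thesis by auto
qed

lemma phi_nonneg: "phi F C x \<ge> 0"
proof -
  have "0 \<le> Theta F C x 0" by (simp add: Theta_def)
  also have "\<dots> \<le> phi F C x" by (rule phi_ge[OF binvecs_zero])
  finally show ?thesis .
qed

lemma Theta_differentiable:
  assumes "\<forall>z. F differentiable (at z)"
  shows "(\<lambda>w. Theta F C w yb) differentiable (at z)"
proof -
  have e: "(\<lambda>w. Theta F C w yb) = (\<lambda>w. (1/2) * ((F w - C *v yb) \<bullet> (F w - C *v yb)))"
    by (simp add: Theta_def power2_norm_eq_inner)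
  show ?thesis unfolding e using assms
    by (intro differentiable_mult differentiable_inner differentiable_diff differentiable_const) auto
qed

lemma cont_Max:
  fixes f :: "'s \<Rightarrow> 'a::topological_space \<Rightarrow> real"
  assumes "finite S" "S \<noteq> {}" "\<And>s. s \<in> S \<Longrightarrow> continuous_on A (f s)"
  shows "continuous_on A (\<lambda>x. Max ((\<lambda>s. f s x) ` S))"
  using assms
proof (induction S rule: finite_ne_induct)
  case (singleton s) then show ?case by simp
next
  case (insert s S)
  have "(\<lambda>x. Max ((\<lambda>s. f s x) ` insert s S)) = (\<lambda>x. max (f s x) (Max ((\<lambda>s. f s x) ` S)))"
    using insert by (auto simp: fun_eq_iff Max_insert)
  then show ?case using insert by (auto intro!: continuous_on_max)
qed

lemma phi_continuous:
  assumes "\<forall>z. F differentiable (at z)"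
  shows "continuous_on A (phi F C)"
proof -
  have "continuous_on A (\<lambda>w. Theta F C w yb)" for yb
    using Theta_differentiable[OF assms] differentiable_imp_continuous_within
    by (metis continuous_at_imp_continuous_on)
  then have "continuous_on A (\<lambda>x. Max ((\<lambda>yb. Theta F C x yb) ` binvecs))"
    by (intro cont_Max binvecs_finite) (use binvecs_zero in auto)
  then show ?thesis by (simp add: phi_def[abs_def])
qed
lemma sq_diff: fixes a b :: "'a::real_inner"
  shows "norm (a - b)^2 = norm a^2 - 2*(a \<bullet> b) + norm b^2"
  by (simp add: power2_norm_eq_inner inner_diff_left inner_diff_right inner_commute)

lemma sq_add: fixes a b :: "'a::real_inner"
  shows "norm (a + b)^2 = norm a^2 + 2*(a \<bullet> b) + norm b^2"
  by (simp add: power2_norm_eq_inner inner_add_left inner_add_right inner_commute)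

lemma phi_wc:
  fixes X :: "(real^'m) set" and F :: "real^'m \<Rightarrow> real^'r" and C :: "real^'n^'r"
  assumes X: "convex X" and Fd: "\<forall>z. F differentiable (at z)"
    and lip: "\<forall>yb\<in>binvecs. ell-lipschitz_on X (grad (\<lambda>w. Theta F C w yb))"
    and u: "u \<in> X" and v: "v \<in> X" and t: "0 \<le> t" "t \<le> 1"
  shows "phi F C (u + t *\<^sub>R (v - u)) \<le> (1 - t) * phi F C u + t * phi F C v + ell/2 * t * (1 - t) * norm (v - u)^2"
proof -
  define d where "d = v - u"
  define z where "z = u + t *\<^sub>R d"
  have z: "z \<in> X"
  proof -
    have "z = (1 - t) *\<^sub>R u + t *\<^sub>R v" by (simp add: z_def d_def algebra_simps)
    then show ?thesis using convexD[OF X u v, of "1-t" t] t by simp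
  qed
  obtain yb where yb: "yb \<in> binvecs" "phi F C z = Theta F C z yb" using phi_attained by blast
  define f where "f = (\<lambda>w. Theta F C w yb)"
  define g where "g = grad f z"
  have fd: "\<And>w. f differentiable (at w)" unfolding f_def by (rule Theta_differentiable[OF Fd])
  have fl: "ell-lipschitz_on X (grad f)" using lip yb unfolding f_def by blast
  have h1: "f u \<ge> f z + g \<bullet> (u - z) - ell/2 * norm (u - z)^2"
    unfolding g_def by (rule descent[OF X fd fl z u])
  have h2: "f v \<ge> f z + g \<bullet> (v - z) - ell/2 * norm (v - z)^2"
    unfolding g_def by (rule descent[OF X fd fl z v])
  have e1: "u - z = (-t) *\<^sub>R d" by (simp add: z_def)
  have e2: "v - z = (1 - t) *\<^sub>R d" by (simp add: z_def d_def algebra_simps)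
  have h1': "f u \<ge> f z - t * (g \<bullet> d) - ell/2 * t^2 * norm d^2"
    using h1 unfolding e1 by (simp add: power_mult_distrib)
  have h2': "f v \<ge> f z + (1 - t) * (g \<bullet> d) - ell/2 * (1 - t)^2 * norm d^2"
    using h2 unfolding e2 using t by (simp add: power_mult_distrib)
  have m1: "(1 - t) * f u \<ge> (1 - t) * (f z - t * (g \<bullet> d) - ell/2 * t^2 * norm d^2)"
    using h1' t by (intro mult_left_mono) auto
  have m2: "t * f v \<ge> t * (f z + (1 - t) * (g \<bullet> d) - ell/2 * (1 - t)^2 * norm d^2)"
    using h2' t by (intro mult_left_mono) auto
  have eq: "(1 - t) * (f z - t * (g \<bullet> d) - ell/2 * t^2 * norm d^2) + t * (f z + (1 - t) * (g \<bullet> d) - ell/2 * (1 - t)^2 * norm d^2)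
      = f z - ell/2 * t * (1 - t) * norm d^2"
    by (simp add: power2_eq_square field_simps)
  have pu: "f u \<le> phi F C u" unfolding f_def by (rule phi_ge[OF yb(1)])
  have pv: "f v \<le> phi F C v" unfolding f_def by (rule phi_ge[OF yb(1)])
  have "(1 - t) * f u \<le> (1 - t) * phi F C u" using pu t by (intro mult_left_mono) auto
  moreover have "t * f v \<le> t * phi F C v" using pv t by (intro mult_left_mono) auto
  moreover have "phi F C z = f z" using yb by (simp add: f_def)
  ultimately show ?thesis using m1 m2 eq by (simp add: z_def d_def)
qed

lemma strong_min:
  fixes X :: "(real^'m) set" and F :: "real^'m \<Rightarrow> real^'r" and C :: "real^'n^'r"
  assumes X: "convex X" and Fd: "\<forall>z. F differentiable (at z)"
    and lip: "\<forall>yb\<in>binvecs. ell-lipschitz_on X (grad (\<lambda>w. Theta F C w yb))"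
    and ell: "ell > 0"
    and p: "p \<in> X" and pmin: "\<forall>w\<in>X. phi F C p + ell * norm (p - x)^2 \<le> phi F C w + ell * norm (w - x)^2"
    and w: "w \<in> X"
  shows "phi F C w + ell * norm (w - x)^2 \<ge> phi F C p + ell * norm (p - x)^2 + ell/2 * norm (w - p)^2"
proof -
  define G where "G v = phi F C v + ell * norm (v - x)^2" for v
  define d where "d = w - p"
  define n where "n = norm d^2"
  define a where "a = (p - x) \<bullet> d"
  have key: "G w - G p \<ge> ell/2 * (1 - t) * n" if t: "0 < t" "t \<le> 1" for t
  proof -
    define z where "z = p + t *\<^sub>R d"
    have z: "z \<in> X"
    proof -
      have "z = (1 - t) *\<^sub>R p + t *\<^sub>R w" by (simp add: z_def d_def algebra_simps)
      then show ?thesis using convexD[OF X p w, of "1-t" t] t by simp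
    qed
    have Gz: "G p \<le> G z" using pmin z by (simp add: G_def)
    have pz: "phi F C z \<le> (1 - t) * phi F C p + t * phi F C w + ell/2 * t * (1 - t) * n"
      using phi_wc[OF X Fd lip p w, of t] t by (simp add: z_def d_def n_def)
    have nz: "norm (z - x)^2 = norm (p - x)^2 + 2 * t * a + t^2 * n"
    proof -
      have e: "z - x = (p - x) + t *\<^sub>R d" by (simp add: z_def)
      show ?thesis unfolding e sq_add by (simp add: a_def n_def power_mult_distrib)
    qed
    have nw: "norm (w - x)^2 = norm (p - x)^2 + 2 * a + n"
    proof -
      have e: "w - x = (p - x) + d" by (simp add: d_def)
      show ?thesis unfolding e sq_add by (simp add: a_def n_def)
    qed
    have "G z \<le> (1 - t) * G p + t * G w - ell/2 * t * (1 - t) * n"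
    proof -
      have "G z = phi F C z + ell * (norm (p - x)^2 + 2 * t * a + t^2 * n)" by (simp add: G_def nz)
      also have "\<dots> \<le> (1 - t) * phi F C p + t * phi F C w + ell/2 * t * (1 - t) * n
                 + ell * (norm (p - x)^2 + 2 * t * a + t^2 * n)" using pz by simp
      also have "\<dots> = (1 - t) * G p + t * G w - ell/2 * t * (1 - t) * n"
        unfolding G_def nw by (simp add: algebra_simps power2_eq_square)
      finally show ?thesis .
    qed
    with Gz have "t * (G w - G p) \<ge> t * (ell/2 * (1 - t) * n)" by (simp add: algebra_simps)
    then show ?thesis using t by simp
  qed
  have "G w - G p \<ge> ell/2 * n"
  proof (rule ccontr)
    assume "\<not> ?thesis"
    then have dl: "ell/2 * n - (G w - G p) > 0" by simp
    have n0: "n \<ge> 0" by (simp add: n_def)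
    define t where "t = min 1 ((ell/2 * n - (G w - G p)) / (ell * n + 1))"
    have "ell * n + 1 > 0" using ell n0 by (smt (verit) mult_nonneg_nonneg)
    then have t0: "t > 0" using dl by (simp add: t_def)
    have t1: "t \<le> 1" by (simp add: t_def)
    have "t * (ell * n + 1) \<le> ell/2 * n - (G w - G p)"
    proof -
      have "t \<le> (ell/2 * n - (G w - G p)) / (ell * n + 1)" by (simp add: t_def)
      moreover have "ell * n + 1 > 0" using ell n0 by (smt (verit) mult_nonneg_nonneg)
      ultimately show ?thesis by (simp add: pos_le_divide_eq)
    qed
    moreover have "G w - G p \<ge> ell/2 * (1 - t) * n" using key[OF t0 t1] .
    moreover have "t * (ell * n + 1) = t * ell * n + t" by (simp add: algebra_simps)
    moreover have "ell/2 * (1 - t) * n = ell/2 * n - (t * ell * n) / 2" by (simp add: field_simps)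
    moreover have "t * ell * n \<ge> 0" using t0 ell n0 by simp
    ultimately show False using t0 by linarith
  qed
  then show ?thesis by (simp add: G_def n_def d_def)
qed
lemma moreau_val:
  fixes X :: "(real^'m) set" and F :: "real^'m \<Rightarrow> real^'r" and C :: "real^'n^'r"
  assumes ell: "ell > 0" and p: "p \<in> X"
    and pmin: "\<forall>w\<in>X. phi F C p + ell * norm (p - x)^2 \<le> phi F C w + ell * norm (w - x)^2"
  shows "moreau (phi F C) X (1 / (2 * ell)) x = phi F C p + ell * norm (p - x)^2"
proof -
  have c: "1 / (2 * (1 / (2 * ell))) = ell" using ell by simp
  have "Inf ((\<lambda>w. phi F C w + ell * norm (w - x)^2) ` X) = phi F C p + ell * norm (p - x)^2"
    by (rule cInf_eq_minimum) (use p pmin in auto)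
  then show ?thesis unfolding moreau_def c .
qed

lemma moreau_deriv:
  fixes X :: "(real^'m) set" and F :: "real^'m \<Rightarrow> real^'r" and C :: "real^'n^'r"
  assumes X: "convex X" and Fd: "\<forall>z. F differentiable (at z)"
    and lip: "\<forall>yb\<in>binvecs. ell-lipschitz_on X (grad (\<lambda>w. Theta F C w yb))"
    and ell: "ell > 0"
    and ex: "\<And>x. \<exists>p\<in>X. \<forall>w\<in>X. phi F C p + ell * norm (p - x)^2 \<le> phi F C w + ell * norm (w - x)^2"
    and p: "p \<in> X"
    and pmin: "\<forall>w\<in>X. phi F C p + ell * norm (p - x)^2 \<le> phi F C w + ell * norm (w - x)^2"
  shows "(moreau (phi F C) X (1 / (2 * ell)) has_derivative (\<lambda>h. ((2 * ell) *\<^sub>R (x - p)) \<bullet> h)) (at x)"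
proof -
  define M where "M = moreau (phi F C) X (1 / (2 * ell))"
  define v where "v = (2 * ell) *\<^sub>R (x - p)"
  have Mx: "M x = phi F C p + ell * norm (p - x)^2" unfolding M_def by (rule moreau_val[OF ell p pmin])
  have bnd: "\<bar>M (x + h) - M x - v \<bullet> h\<bar> \<le> ell * norm h^2" for h
  proof -
    obtain p' where p': "p' \<in> X"
      and p'min: "\<forall>w\<in>X. phi F C p' + ell * norm (p' - (x + h))^2 \<le> phi F C w + ell * norm (w - (x + h))^2"
      using ex by blast
    have Mxh: "M (x + h) = phi F C p' + ell * norm (p' - (x + h))^2"
      unfolding M_def by (rule moreau_val[OF ell p' p'min])
    have up: "M (x + h) \<le> phi F C p + ell * norm (p - (x + h))^2" using Mxh p'min p by auto
    have e1: "norm (p - (x + h))^2 = norm (p - x)^2 - 2 * ((p - x) \<bullet> h) + norm h^2"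
    proof -
      have "p - (x + h) = (p - x) - h" by simp
      then show ?thesis by (simp only: sq_diff)
    qed
    have vh: "v \<bullet> h = - 2 * ell * ((p - x) \<bullet> h)"
    proof -
      have "v = (- 2 * ell) *\<^sub>R (p - x)" by (simp add: v_def algebra_simps)
      then show ?thesis by simp
    qed
    define a where "a = (p - x) \<bullet> h"
    define b where "b = (p' - p) \<bullet> h"
    have up': "M (x + h) \<le> phi F C p + ell * norm (p - x)^2 - 2 * ell * a + ell * norm h^2"
      using up unfolding e1 a_def[symmetric] by (simp add: algebra_simps)
    have vh': "v \<bullet> h = - 2 * ell * a" using vh by (simp add: a_def)
    have upper: "M (x + h) - M x - v \<bullet> h \<le> ell * norm h^2"
      using up' Mx vh' by linarith
    have sc: "phi F C p' + ell * norm (p' - x)^2 \<ge> phi F C p + ell * norm (p - x)^2 + ell/2 * norm (p' - p)^2"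
      by (rule strong_min[OF X Fd lip ell p pmin p'])
    have e2: "norm (p' - (x + h))^2 = norm (p' - x)^2 - 2 * ((p' - x) \<bullet> h) + norm h^2"
    proof -
      have "p' - (x + h) = (p' - x) - h" by simp
      then show ?thesis by (simp only: sq_diff)
    qed
    have e3: "(p' - x) \<bullet> h = (p' - p) \<bullet> h + (p - x) \<bullet> h"
    proof -
      have "p' - x = (p' - p) + (p - x)" by simp
      then show ?thesis by (metis inner_add_left)
    qed
    have e4: "norm ((p' - p) - 2 *\<^sub>R h)^2 = norm (p' - p)^2 - 4 * ((p' - p) \<bullet> h) + 4 * norm h^2"
      by (simp add: sq_diff power_mult_distrib)
    have q: "0 \<le> ell/2 * norm ((p' - p) - 2 *\<^sub>R h)^2" using ell by simp
    have Mxh': "M (x + h) = phi F C p' + ell * norm (p' - x)^2 - 2 * ell * b - 2 * ell * a + ell * norm h^2"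
      using Mxh unfolding e2 e3 a_def[symmetric] b_def[symmetric] by (simp add: algebra_simps)
    have q': "0 \<le> ell/2 * norm (p' - p)^2 - 2 * ell * b + 2 * ell * norm h^2"
      using q unfolding e4 b_def[symmetric] by (simp add: algebra_simps)
    have lower: "M (x + h) - M x - v \<bullet> h \<ge> - ell * norm h^2"
      using Mxh' Mx sc q' vh' by linarith
    show ?thesis using upper lower by (simp add: abs_le_iff)
  qed
  have "(\<lambda>h. norm (M (x + h) - M x - v \<bullet> h) / norm h) \<midarrow>0\<rightarrow> 0"
  proof (rule Lim_null_comparison)
    show "\<forall>\<^sub>F h in at 0. norm (norm (M (x + h) - M x - v \<bullet> h) / norm h) \<le> ell * norm h"
    proof (rule always_eventually, rule allI)
      fix h :: "real^'m"
      show "norm (norm (M (x + h) - M x - v \<bullet> h) / norm h) \<le> ell * norm h"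
      proof (cases "h = 0")
        case True then show ?thesis by simp
      next
        case False
        then have hp: "norm h > 0" by simp
        have "norm (M (x + h) - M x - v \<bullet> h) \<le> ell * norm h * norm h"
          using bnd[of h] by (simp add: power2_eq_square mult.assoc)
        then show ?thesis using hp by (simp add: divide_le_eq)
      qed
    qed
    show "((\<lambda>h. ell * norm h) \<longlongrightarrow> 0) (at 0)"
      by (auto intro!: tendsto_eq_intros)
  qed
  then have "(M has_derivative (\<lambda>h. v \<bullet> h)) (at x)"
    unfolding has_derivative_at by (simp add: bounded_linear_inner_right)
  then show ?thesis by (simp add: M_def v_def)
qed
theorem mainTheorem8:
  fixes X :: "(real^'m) set"
    and F :: "real^'m \<Rightarrow> real^'r"
    and C :: "real^'n^'r"
    and L ell \<Delta> \<epsilon> \<mu> :: real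
    and K :: nat
    and x0 :: "real^'m"
    and x :: "nat \<Rightarrow> real^'m"
    and y :: "nat \<Rightarrow> real^'n"
  assumes X_ne: "X \<noteq> {}" and X_convex: "convex X" and X_compact: "compact X"
    and F_diff: "\<forall>z. F differentiable (at z)"
    and C_acute: "acute C" and C_cols: "\<forall>i. column i C \<noteq> 0"
    and L_pos: "L > 0" and ell_pos: "ell > 0"
    and Theta_lip: "\<forall>yb\<in>binvecs. L-lipschitz_on X (\<lambda>z. Theta F C z yb)"
    and grad_bd: "\<forall>yb\<in>binvecs. \<forall>z\<in>X. norm (grad (\<lambda>w. Theta F C w yb) z) \<le> L"
    and grad_lip: "\<forall>yb\<in>binvecs. ell-lipschitz_on X (grad (\<lambda>w. Theta F C w yb))"
    and x0_in: "x0 \<in> X"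
    and Delta_def: "\<Delta> = phi F C x0 - (INF z\<in>X. phi F C z)"
    and Delta_pos: "\<Delta> > 0"
    and eps_pos: "\<epsilon> > 0"
    and K_def: "K = nat \<lfloor>64 * L^2 * ell * \<Delta> / \<epsilon>^4\<rfloor>"
    and mu_def: "\<mu> = sqrt (\<Delta> / (L^2 * ell * (real K + 1)))"
    and x_init: "x 0 = x0"
    and y_max: "\<forall>k\<le>K. y k \<in> binvecs \<and> (\<forall>yb\<in>binvecs. Theta F C (x k) yb \<le> Theta F C (x k) (y k))"
    and x_step: "\<forall>k\<le>K. x (Suc k) = closest_point X (x k - \<mu> *\<^sub>R grad (\<lambda>w. Theta F C w (y k)) (x k))"
  shows "measure_pmf.expectation (pmf_of_set {0..K})
           (\<lambda>k. norm (grad (moreau (phi F C) X (1 / (2 * ell))) (x k))) \<le> \<epsilon>"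
proof -
  define M where "M = moreau (phi F C) X (1 / (2 * ell))"
  define G where "G z w = phi F C w + ell * norm (w - z)^2" for z w
  have X_closed: "closed X" using X_compact by (rule compact_imp_closed)
  have ex: "\<exists>p\<in>X. \<forall>w\<in>X. phi F C p + ell * norm (p - z)^2 \<le> phi F C w + ell * norm (w - z)^2" for z
  proof -
    have "continuous_on X (\<lambda>w. phi F C w + ell * norm (w - z)^2)"
      by (intro continuous_intros phi_continuous F_diff)
    then show ?thesis using continuous_attains_inf[OF X_compact X_ne] by blast
  qed
  define prox where "prox z = (SOME p. p \<in> X \<and> (\<forall>w\<in>X. phi F C p + ell * norm (p - z)^2 \<le> phi F C w + ell * norm (w - z)^2))" for z
  have prox: "prox z \<in> X \<and> (\<forall>w\<in>X. phi F C (prox z) + ell * norm (prox z - z)^2 \<le> phi F C w + ell * norm (w - z)^2)" for z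
    unfolding prox_def by (rule someI_ex) (use ex[of z] in blast)
  have Mval: "M z = phi F C (prox z) + ell * norm (prox z - z)^2" for z
    unfolding M_def using moreau_val[OF ell_pos] prox by blast
  have gradM: "grad M z = (2 * ell) *\<^sub>R (z - prox z)" for z
    unfolding M_def
    by (rule grad_unique, rule moreau_deriv[OF X_convex F_diff grad_lip ell_pos ex]) (use prox in auto)
  define a where "a k = norm (grad M (x k))" for k
  have a_eq: "a k ^ 2 = 4 * ell^2 * norm (x k - prox (x k))^2" for k
    unfolding a_def gradM using ell_pos by (simp add: power_mult_distrib)
  have xin: "x k \<in> X" if "k \<le> Suc K" for k
    using that
  proof (induction k)
    case 0 then show ?case using x_init x0_in by simp
  next
    case (Suc k)
    then have "x (Suc k) = closest_point X (x k - \<mu> *\<^sub>R grad (\<lambda>w. Theta F C w (y k)) (x k))"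
      using x_step by simp
    then show ?case using closest_point_in_set[OF X_closed X_ne] by simp
  qed
  have N_pos: "real K + 1 > 0" by simp
  have mu_pos: "\<mu> > 0" unfolding mu_def using Delta_pos L_pos ell_pos by simp
  have mu_sq: "\<mu>^2 = \<Delta> / (L^2 * ell * (real K + 1))"
    unfolding mu_def using Delta_pos L_pos ell_pos by simp
  have step: "M (x (Suc k)) \<le> M (x k) - \<mu>/2 * a k ^ 2 + ell * \<mu>^2 * L^2" if k: "k \<le> K" for k
  proof -
    define p where "p = prox (x k)"
    define xk where "xk = x k"
    define yk where "yk = y k"
    define f where "f = (\<lambda>w. Theta F C w yk)"
    define g where "g = grad f xk"
    define D where "D = norm (p - xk)^2"
    have xk: "xk \<in> X" using xin k by (simp add: xk_def)
    have p: "p \<in> X" and pmin: "\<forall>w\<in>X. phi F C p + ell * norm (p - xk)^2 \<le> phi F C w + ell * norm (w - xk)^2"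
      using prox[of xk] by (auto simp: p_def xk_def)
    have yk: "yk \<in> binvecs" using y_max k by (simp add: yk_def)
    have fd: "\<And>w. f differentiable (at w)" unfolding f_def by (rule Theta_differentiable[OF F_diff])
    have fl: "ell-lipschitz_on X (grad f)" using grad_lip yk unfolding f_def by blast
    have gb: "norm g \<le> L" using grad_bd yk xk by (simp add: g_def f_def)
    have g2: "norm g ^ 2 \<le> L^2" using gb by (simp add: power_mono)
    have phixk: "phi F C xk = f xk"
    proof -
      obtain yb where yb: "yb \<in> binvecs" "phi F C xk = Theta F C xk yb" using phi_attained by blast
      have "Theta F C xk yb \<le> f xk" using y_max k yb by (simp add: f_def xk_def yk_def)
      moreover have "f xk \<le> phi F C xk" unfolding f_def by (rule phi_ge[OF yk])
      ultimately show ?thesis using yb by simp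
    qed
    have desc: "f p \<ge> f xk + g \<bullet> (p - xk) - ell/2 * D"
      unfolding g_def D_def by (rule descent[OF X_convex fd fl xk p])
    have fp: "f p \<le> phi F C p" unfolding f_def by (rule phi_ge[OF yk])
    have sc: "phi F C xk + ell * norm (xk - xk)^2 \<ge> phi F C p + ell * norm (p - xk)^2 + ell/2 * norm (xk - p)^2"
      by (rule strong_min[OF X_convex F_diff grad_lip ell_pos p pmin xk])
    have nsym: "norm (xk - p) = norm (p - xk)" by (rule norm_minus_commute)
    have sc': "phi F C xk \<ge> phi F C p + 3/2 * ell * D" using sc unfolding nsym D_def by simp
    have Gb: "g \<bullet> (p - xk) \<le> - ell * D" using desc fp phixk sc' by simp
    have xs: "x (Suc k) = closest_point X (xk - \<mu> *\<^sub>R g)"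
      using x_step k by (simp add: xk_def g_def f_def yk_def)
    have Mle: "M (x (Suc k)) \<le> phi F C p + ell * norm (p - x (Suc k))^2"
    proof -
      have "M (x (Suc k)) \<le> phi F C p + ell * norm (p - x (Suc k))^2"
        using Mval[of "x (Suc k)"] prox[of "x (Suc k)"] p by auto
      then show ?thesis .
    qed
    have "norm (p - x (Suc k)) = dist (closest_point X p) (closest_point X (xk - \<mu> *\<^sub>R g))"
      using closest_point_self[OF p] xs by (simp add: dist_norm)
    also have "\<dots> \<le> dist p (xk - \<mu> *\<^sub>R g)" by (rule closest_point_lipschitz[OF X_convex X_closed X_ne])
    also have "\<dots> = norm ((p - xk) + \<mu> *\<^sub>R g)" by (simp add: dist_norm algebra_simps)
    finally have n1: "norm (p - x (Suc k)) \<le> norm ((p - xk) + \<mu> *\<^sub>R g)" .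
    have n2: "norm (p - x (Suc k))^2 \<le> norm ((p - xk) + \<mu> *\<^sub>R g)^2"
      using n1 by (simp add: power_mono)
    have n3: "norm ((p - xk) + \<mu> *\<^sub>R g)^2 = D + 2 * \<mu> * (g \<bullet> (p - xk)) + \<mu>^2 * norm g^2"
      unfolding sq_add D_def using mu_pos by (simp add: inner_commute power_mult_distrib)
    have t1: "2 * \<mu> * (g \<bullet> (p - xk)) \<le> 2 * \<mu> * (- ell * D)"
      using Gb mu_pos by (intro mult_left_mono) auto
    have t2: "\<mu>^2 * norm g^2 \<le> \<mu>^2 * L^2" using g2 by (intro mult_left_mono) auto
    have t3: "norm (p - x (Suc k))^2 \<le> D - 2 * \<mu> * ell * D + \<mu>^2 * L^2"
      using n2 n3 t1 t2 by linarith
    have t4: "ell * norm (p - x (Suc k))^2 \<le> ell * (D - 2 * \<mu> * ell * D + \<mu>^2 * L^2)"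
      using t3 ell_pos by (intro mult_left_mono) auto
    have Mk: "M (x k) = phi F C p + ell * D" using Mval[of xk] by (simp add: p_def D_def xk_def)
    have ak: "a k ^ 2 = 4 * ell^2 * D" using a_eq[of k] by (simp add: D_def p_def xk_def norm_minus_commute)
    show ?thesis using Mle t4 Mk ak by (simp add: algebra_simps power2_eq_square)
  qed
  have tele: "M (x n) \<le> M (x 0) - \<mu>/2 * (\<Sum>k<n. a k ^ 2) + real n * (ell * \<mu>^2 * L^2)" if "n \<le> Suc K" for n
    using that
  proof (induction n)
    case 0 then show ?case by simp
  next
    case (Suc n)
    then have "M (x (Suc n)) \<le> M (x n) - \<mu>/2 * a n ^ 2 + ell * \<mu>^2 * L^2" using step by simp
    with Suc show ?case by (simp add: algebra_simps)
  qed
  define N where "N = real K + 1"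
  define S where "S = (\<Sum>k<Suc K. a k ^ 2)"
  define T where "T = (\<Sum>k\<in>{0..K}. a k)"
  define c where "c = L^2 * ell"
  have c_pos: "c > 0" using L_pos ell_pos by (simp add: c_def)
  have N_pos': "N > 0" by (simp add: N_def)
  have tK: "M (x (Suc K)) \<le> M (x 0) - \<mu>/2 * S + N * (ell * \<mu>^2 * L^2)"
    using tele[of "Suc K"] by (simp add: S_def N_def add.commute)
  have bdd: "bdd_below (phi F C ` X)" using phi_nonneg by (intro bdd_belowI[of _ 0]) auto
  have Mlow: "M (x (Suc K)) \<ge> (INF z\<in>X. phi F C z)"
  proof -
    have "(INF z\<in>X. phi F C z) \<le> phi F C (prox (x (Suc K)))"
      using prox[of "x (Suc K)"] bdd by (intro cINF_lower) auto
    also have "\<dots> \<le> M (x (Suc K))" using Mval[of "x (Suc K)"] ell_pos by simp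
    finally show ?thesis .
  qed
  have M0: "M (x 0) \<le> phi F C x0"
    using Mval[of x0] prox[of x0] x0_in x_init by auto
  have den: "L^2 * ell * (real K + 1) > 0" using L_pos ell_pos by simp
  have mu_base: "\<mu>^2 * (L^2 * ell * (real K + 1)) = \<Delta>"
    unfolding mu_sq using den L_pos ell_pos by simp
  have musq2: "N * (ell * \<mu>^2 * L^2) = \<Delta>"
    using mu_base unfolding N_def by (simp add: algebra_simps)
  have S1: "\<mu>/2 * S \<le> 2 * \<Delta>" using tK Mlow M0 musq2 Delta_def by linarith
  have S2: "\<mu> * S \<le> 4 * \<Delta>" using S1 by simp
  have E: "measure_pmf.expectation (pmf_of_set {0..K}) (\<lambda>k. norm (grad M (x k))) = T / N"
    by (subst integral_pmf_of_set) (auto simp: T_def a_def N_def)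
  have CS: "T^2 \<le> N * S"
  proof -
    have "(\<Sum>k\<in>{0..K}. 1 * a k)^2 \<le> (\<Sum>k\<in>{0..K}. 1^2) * (\<Sum>k\<in>{0..K}. (a k)^2)"
      by (rule Cauchy_Schwarz_ineq_sum)
    moreover have "{0..K} = {..<Suc K}" by auto
    ultimately show ?thesis by (simp add: T_def S_def N_def add.commute)
  qed
  define q where "q = 64 * L^2 * ell * \<Delta> / \<epsilon>^4"
  have q0: "q \<ge> 0" using L_pos ell_pos Delta_pos eps_pos by (simp add: q_def)
  have Kq: "real K > q - 1"
  proof -
    have "real K = of_int \<lfloor>q\<rfloor>" using q0 by (simp add: K_def q_def)
    then show ?thesis by linarith
  qed
  have Nq: "N * \<epsilon>^4 > 64 * c * \<Delta>"
  proof -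
    have "N > q" using Kq by (simp add: N_def)
    moreover have "\<epsilon>^4 > 0" using eps_pos by simp
    ultimately have "N * \<epsilon>^4 > q * \<epsilon>^4" by (rule mult_strict_right_mono)
    then show ?thesis using eps_pos by (simp add: q_def c_def)
  qed
  have mu2N: "\<mu>^2 * N * c = \<Delta>" using mu_base unfolding N_def c_def by (simp add: algebra_simps)
  have key: "4 * \<Delta> \<le> \<epsilon>^2 * N * \<mu>"
  proof (rule power2_le_imp_le)
    have "(4 * \<Delta>)^2 = 16 * \<Delta> * \<Delta>" by (simp add: power2_eq_square)
    also have "\<dots> \<le> (N * \<epsilon>^4 / c) * \<Delta>"
    proof -
      have "16 * \<Delta> * c \<le> 64 * c * \<Delta>" using c_pos Delta_pos by simp
      then have "16 * \<Delta> * c \<le> N * \<epsilon>^4" using Nq by linarith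
      then have "16 * \<Delta> \<le> N * \<epsilon>^4 / c" using c_pos by (simp add: pos_le_divide_eq)
      then show ?thesis using Delta_pos mult_right_mono[of "16 * \<Delta>" "N * \<epsilon>^4 / c" \<Delta>] by simp
    qed
    also have "\<dots> = (\<epsilon>^2 * N * \<mu>)^2"
    proof -
      have "(\<epsilon>^2 * N * \<mu>)^2 = \<epsilon>^4 * N * (\<mu>^2 * N)" by (simp add: power_mult_distrib power2_eq_square algebra_simps eval_nat_numeral)
      also have "\<mu>^2 * N = \<Delta> / c" using mu2N c_pos by (simp add: field_simps)
      finally have "(\<epsilon>^2 * N * \<mu>)^2 = \<epsilon>^4 * N * (\<Delta> / c)" .
      then show ?thesis by (simp only: times_divide_eq_right times_divide_eq_left mult_ac)
    qed
    finally show "(4 * \<Delta>)^2 \<le> (\<epsilon>^2 * N * \<mu>)^2" .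
    show "0 \<le> \<epsilon>^2 * N * \<mu>" using N_pos' mu_pos by simp
  qed
  have T0: "T \<ge> 0" by (simp add: T_def a_def sum_nonneg)
  have "T^2 \<le> (\<epsilon> * N)^2"
  proof -
    have "\<mu> * (N * S) = N * (\<mu> * S)" by (simp only: mult_ac)
    also have "\<dots> \<le> N * (4 * \<Delta>)" using mult_left_mono[OF S2, of N] N_pos' by simp
    also have "\<dots> \<le> N * (\<epsilon>^2 * N * \<mu>)" using mult_left_mono[OF key, of N] N_pos' by simp
    also have "\<dots> = \<mu> * (\<epsilon> * N)^2" by (simp only: power2_eq_square mult_ac)
    finally have "\<mu> * (N * S) \<le> \<mu> * (\<epsilon> * N)^2" .
    then have "N * S \<le> (\<epsilon> * N)^2" using mu_pos by (simp only: mult_le_cancel_left_pos)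
    with CS show ?thesis by linarith
  qed
  moreover have "0 \<le> \<epsilon> * N" using eps_pos N_pos' by simp
  ultimately have "T \<le> \<epsilon> * N" by (rule power2_le_imp_le)
  then have TN: "T / N \<le> \<epsilon>" using N_pos' by (simp only: pos_divide_le_eq)
  have E': "measure_pmf.expectation (pmf_of_set {0..K})
           (\<lambda>k. norm (grad (moreau (phi F C) X (1 / (2 * ell))) (x k))) = T / N"
    using E unfolding M_def .
  show ?thesis unfolding E' by (rule TN)
qed

end
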